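(* Let $k$ be a fixed positive integer. There exists a constant $n_0(k)$ such that the following holds. If $n\geq n_0(k)$, $t$ is an integer, and $S\subseteq \mathcal{P}(n)$ has cardinality at least \[\sum_{r=0}^{k-1}\binom{n}{\left\lceil \frac{n-k+1 +2r}{2}\right\rceil} + t,\] then \[\mathrm{comp}(S)\geq t\binom{\left\lceil (n+k)/2\right\rceil}{k}.\]
   Context: $\mathcal{P}(n)$ is the boolean lattice: the set of all subsets of $[n]=\{1,\dots,n\}$ ordered by inclusion. For $S\subseteq \mathcal{P}(n)$, $\mathrm{comp}(S)$ is the number of unordered pairs of distinct comparable elements of $S$. *)

theory Defs
  imports Main "HOL-Library.Library"
begin

text \<open>comp S: number of unordered pairs of distinct comparable elements of S,
  counted as ordered pairs (A,B) with A a proper subset of B.\<close>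
definition comp :: "nat set set \<Rightarrow> nat" where
  "comp S = card {(A, B). A \<in> S \<and> B \<in> S \<and> A \<subset> B}"

end

theory Submission
  imports Defs "HOL-Combinatorics.Multiset_Permutations"
begin

lemma binom_unimodal:
  fixes n r m :: nat
  assumes "r \<le> n" "m \<le> n" "\<bar>2*int m - int n\<bar> \<le> \<bar>2*int r - int n\<bar>"
  shows "n choose r \<le> n choose m"
proof -
  define r' where "r' = min r (n - r)"
  define m' where "m' = min m (n - m)"
  have r': "n choose r = n choose r'" using assms binomial_symmetric[of r n] by (auto simp: r'_def min_def)
  have m': "n choose m = n choose m'" using assms binomial_symmetric[of m n] by (auto simp: m'_def min_def)
  have "r' \<le> m'" "2*m' \<le> n" using assms unfolding r'_def m'_def by (auto simp: min_def abs_if split: if_splits)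
  then show ?thesis using r' m' binomial_mono by metis
qed

lemma binom_mid_ge:
  fixes N k d :: nat
  assumes "k \<le> d" "d + k \<le> N"
  shows "N choose k \<le> N choose d"
  using assms by (intro binom_unimodal) auto

lemma binom_upper_mono:
  fixes a b k :: nat
  assumes "a \<le> b"
  shows "a choose k \<le> b choose k"
  using assms
proof (induction b)
  case 0 then show ?case by simp
next
  case (Suc b)
  show ?case
  proof (cases "a = Suc b")
    case False
    then have "a choose k \<le> b choose k" using Suc by simp
    also have "b choose k \<le> Suc b choose k" by (cases k) auto
    finally show ?thesis .
  qed simp
qed

lemma binom_ratio: "Suc k * (n choose Suc k) = (n - k) * (n choose k)"
  by (metis binomial_absorb_comp binomial_absorption)

lemma binom_double:
  assumes "3 * j + 2 \<le> n"
  shows "2 * (n choose j) \<le> n choose Suc j"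
proof -
  have "2 * Suc j * (n choose j) \<le> (n - j) * (n choose j)" using assms by (intro mult_right_mono) auto
  also have "\<dots> = Suc j * (n choose Suc j)" by (rule binom_ratio[symmetric])
  finally show ?thesis by (metis mult.assoc mult.commute mult_le_cancel1 zero_less_Suc)
qed

lemma binom_geo:
  assumes "3 * j \<le> n + 1"
  shows "(\<Sum>r<j. n choose r) \<le> n choose j"
  using assms
proof (induction j)
  case 0 then show ?case by simp
next
  case (Suc j)
  have "(\<Sum>r<Suc j. n choose r) = (\<Sum>r<j. n choose r) + (n choose j)" by simp
  also have "\<dots> \<le> 2 * (n choose j)" using Suc by simp
  also have "\<dots> \<le> n choose Suc j" using Suc.prems by (intro binom_double) simp
  finally show ?case .
qed

definition dd :: "nat \<Rightarrow> nat \<Rightarrow> nat" where "dd n r = (if 2*r \<le> n then n - 2*r else 2*r - n)"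
definition KK :: "nat \<Rightarrow> nat \<Rightarrow> nat" where "KK n r = (n+1) * dd n r + r"
definition hv :: "nat \<Rightarrow> nat \<Rightarrow> nat \<Rightarrow> bool" where "hv n r' r \<longleftrightarrow> KK n r' < KK n r"
definition bnd :: "nat \<Rightarrow> nat \<Rightarrow> nat \<Rightarrow> nat" where
  "bnd n a b = (if a < b then (n-a) choose (b-a) else a choose (a-b))"

lemma KK_less:
  assumes "r \<le> n" "a \<le> n" "KK n r < KK n a"
  shows "dd n r < dd n a \<or> (dd n r = dd n a \<and> r < a)"
proof (rule ccontr)
  assume c: "\<not> ?thesis"
  then consider "dd n r > dd n a" | "dd n r = dd n a" "r \<ge> a" by linarith
  then show False
  proof cases
    case 1
    then have "(n+1) * (dd n a + 1) \<le> (n+1) * dd n r" by (intro mult_le_mono2) simp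
    then show False using assms unfolding KK_def by (simp add: algebra_simps)
  next
    case 2 then show False using assms unfolding KK_def by simp
  qed
qed

lemma KK_inj:
  assumes "r \<le> n" "a \<le> n" "KK n r = KK n a"
  shows "r = a"
proof (rule ccontr)
  assume "r \<noteq> a"
  then consider "dd n r > dd n a" | "dd n r < dd n a" | "dd n r = dd n a" by linarith
  then show False
  proof cases
    case 1
    then have "(n+1) * (dd n a + 1) \<le> (n+1) * dd n r" by (intro mult_le_mono2) simp
    then show False using assms unfolding KK_def by (simp add: algebra_simps)
  next
    case 2
    then have "(n+1) * (dd n r + 1) \<le> (n+1) * dd n a" by (intro mult_le_mono2) simp
    then show False using assms unfolding KK_def by (simp add: algebra_simps)
  next
    case 3 then show False using assms \<open>r \<noteq> a\<close> unfolding KK_def by simp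
  qed
qed

lemma hv_low:
  assumes "r \<le> n" "a \<le> n" "2*a \<le> n" "hv n r a"
  shows "a < r \<and> r + a < n"
  using KK_less[OF assms(1,2)] assms(3,4) unfolding hv_def dd_def by (auto split: if_splits)

lemma hv_high:
  assumes "r \<le> n" "a \<le> n" "\<not> 2*a \<le> n" "hv n r a"
  shows "n \<le> r + a \<and> r < a"
  using KK_less[OF assms(1,2)] assms(3,4) unfolding hv_def dd_def by (auto split: if_splits)

lemma mid_dominates:
  fixes n k L r m :: nat
  assumes "k \<ge> 1" "k \<le> n" "L = (n + 2 - k) div 2" "r \<le> n" "r \<notin> {L..<L+k}" "m \<in> {L..<L+k}"
  shows "n choose r \<le> n choose m"
proof -
  have L1: "2*L \<le> n+2-k" "n+1-k \<le> 2*L" using assms(3) by auto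
  show ?thesis
    using assms(1,2,4,5,6) L1 by (intro binom_unimodal) (auto simp: abs_if)
qed

lemma topk:
  fixes n k L :: nat and U :: "nat set"
  assumes "k \<ge> 1" "k \<le> n" "L = (n + 2 - k) div 2" "finite U" "U \<subseteq> {..n}" "card U \<le> k"
  shows "(\<Sum>r\<in>U. n choose r) \<le> (\<Sum>m\<in>{L..<L+k}. n choose m)"
proof -
  let ?M = "{L..<L+k}"
  let ?f = "\<lambda>r. n choose r"
  have c1: "card (U - ?M) = card U - card (U \<inter> ?M)" using assms(4) by (simp add: card_Diff_subset_Int)
  have c2: "card (?M - U) = k - card (?M \<inter> U)" by (simp add: card_Diff_subset_Int)
  have "card (U - ?M) \<le> card (?M - U)" using c1 c2 assms(6) by (simp add: Int_commute)
  then obtain g where g: "g ` (U - ?M) \<subseteq> ?M - U" "inj_on g (U - ?M)"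
    using card_le_inj[of "U - ?M" "?M - U"] assms(4) by auto
  have "(\<Sum>r\<in>U - ?M. ?f r) \<le> (\<Sum>r\<in>U - ?M. ?f (g r))"
  proof (rule sum_mono)
    fix r assume r: "r \<in> U - ?M"
    have "g r \<in> ?M" using g(1) r by blast
    moreover have "r \<notin> ?M" "r \<le> n" using r assms(5) by auto
    ultimately show "?f r \<le> ?f (g r)" using mid_dominates[OF assms(1,2,3)] by blast
  qed
  also have "\<dots> = (\<Sum>r\<in>g ` (U - ?M). ?f r)" using g(2) by (simp add: sum.reindex)
  also have "\<dots> \<le> (\<Sum>r\<in>?M - U. ?f r)" using g(1) by (intro sum_mono2) auto
  finally have le: "(\<Sum>r\<in>U - ?M. ?f r) \<le> (\<Sum>r\<in>?M - U. ?f r)" .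
  have "(\<Sum>r\<in>U. ?f r) = (\<Sum>r\<in>U \<inter> ?M. ?f r) + (\<Sum>r\<in>U - ?M. ?f r)"
    using assms(4) by (rule sum.Int_Diff)
  moreover have "(\<Sum>r\<in>?M. ?f r) = (\<Sum>r\<in>?M \<inter> U. ?f r) + (\<Sum>r\<in>?M - U. ?f r)"
    by (rule sum.Int_Diff) simp
  ultimately show ?thesis using le by (simp add: Int_commute)
qed

lemma extremes:
  fixes n k L :: nat and U :: "nat set"
  assumes "k \<ge> 1" "6*k+2 \<le> n" "L = (n + 2 - k) div 2" "U \<subseteq> {..n}"
    "\<forall>r\<in>U. r < 2*k \<or> n - 2*k < r"
  shows "(\<Sum>r\<in>U. n choose r) \<le> (\<Sum>m\<in>{L..<L+k}. n choose m)"
proof -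
  let ?f = "\<lambda>r. n choose r"
  have fin: "finite U" using assms(4) finite_subset by blast
  have "(\<Sum>r\<in>U. ?f r) \<le> (\<Sum>r\<in>{..<2*k} \<union> {n-2*k<..n}. ?f r)"
    using assms(4,5) by (intro sum_mono2) auto
  also have "\<dots> \<le> (\<Sum>r\<in>{..<2*k}. ?f r) + (\<Sum>r\<in>{n-2*k<..n}. ?f r)"
  proof -
    have "(\<Sum>r\<in>{..<2*k} \<union> {n-2*k<..n}. ?f r) + (\<Sum>r\<in>{..<2*k} \<inter> {n-2*k<..n}. ?f r)
       = (\<Sum>r\<in>{..<2*k}. ?f r) + (\<Sum>r\<in>{n-2*k<..n}. ?f r)" by (rule sum.union_inter) auto
    then show ?thesis by linarith
  qed
  also have "(\<Sum>r\<in>{n-2*k<..n}. ?f r) = (\<Sum>r\<in>{..<2*k}. ?f r)"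
    apply (rule sum.reindex_bij_witness[of _ "\<lambda>r. n - r" "\<lambda>r. n - r"])
    using assms(2) apply auto[4]
    by (metis binomial_symmetric greaterThanAtMost_iff)
  also have "(\<Sum>r\<in>{..<2*k}. ?f r) + (\<Sum>r\<in>{..<2*k}. ?f r) \<le> 2 * ?f (2*k)"
    using binom_geo[of "2*k" n] assms(2) by simp
  also have "\<dots> \<le> ?f (Suc (2*k))" using assms(2) by (intro binom_double) simp
  also have "\<dots> \<le> ?f L"
  proof -
    have L1: "2*L \<le> n+2-k" "n+1-k \<le> 2*L" using assms(3) by auto
    show ?thesis using assms(1,2) L1 by (intro binom_unimodal) (auto simp: abs_if)
  qed
  also have "\<dots> \<le> (\<Sum>m\<in>{L..<L+k}. ?f m)"
    using assms(1) by (intro member_le_sum) auto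
  finally show ?thesis by simp
qed

lemma div2_le: "a \<le> 2*b + 1 \<Longrightarrow> a div 2 \<le> (b::nat)" by linarith

lemma pigeon_up:
  fixes H :: "nat set"
  assumes "finite H" "card H \<ge> k" "k \<ge> 1" "\<forall>r\<in>H. x < r"
  shows "\<exists>m\<in>H. x + k \<le> m"
proof (rule ccontr)
  assume "\<not> ?thesis"
  then have "H \<subseteq> {x<..<x+k}" using assms by force
  then have "card H \<le> card {x<..<x+k}" by (intro card_mono) auto
  then show False using assms by simp
qed

lemma pigeon_down:
  fixes H :: "nat set"
  assumes "finite H" "card H \<ge> k" "k \<ge> 1" "\<forall>r\<in>H. r < x"
  shows "\<exists>m\<in>H. m + k \<le> x"
proof (rule ccontr)
  assume nt: "\<not> (\<exists>m\<in>H. m + k \<le> x)"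
  have "H \<subseteq> {x+1-k..<x}"
  proof
    fix r assume r: "r \<in> H"
    then have "r < x" "\<not> r + k \<le> x" using assms nt by auto
    then have "x + 1 - k \<le> r" by arith
    then show "r \<in> {x+1-k..<x}" using \<open>r < x\<close> by simp
  qed
  then have "card H \<le> card {x+1-k..<x}" by (intro card_mono) auto
  then show False using assms by simp
qed

lemma D_le:
  fixes N d k n :: nat
  assumes "k \<le> d" "d + k \<le> N" "(n+k+1) div 2 \<le> N"
  shows "((n+k+1) div 2) choose k \<le> N choose d"
  using binom_upper_mono[OF assms(3), of k] binom_mid_ge[OF assms(1,2)] by linarith

lemma uncharged_bound:
  fixes n k L D :: nat and R :: "nat set"
  assumes k1: "k \<ge> 1" and nbig: "6*k+2 \<le> n" and Ld: "L = (n+2-k) div 2"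
    and Dd: "D = ((n+k+1) div 2) choose k" and finR: "finite R" and Rn: "R \<subseteq> {..n}"
  shows "(\<Sum>r\<in>{r\<in>R. \<not>(\<exists>r'\<in>R. hv n r' r \<and> D \<le> bnd n r r')}. n choose r)
           \<le> (\<Sum>m\<in>{L..<L+k}. n choose m)"
proof -
  define U where "U = {r\<in>R. \<not>(\<exists>r'\<in>R. hv n r' r \<and> D \<le> bnd n r r')}"
  have finU: "finite U" and UR: "U \<subseteq> R" and Un: "U \<subseteq> {..n}" using finR Rn by (auto simp: U_def)
  have main: "(\<Sum>r\<in>U. n choose r) \<le> (\<Sum>m\<in>{L..<L+k}. n choose m)"
  proof (cases "card U \<le> k")
    case True
    then show ?thesis using topk[OF k1 _ Ld finU Un] nbig by simp
  next
    case False
    then have Une: "U \<noteq> {}" by auto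
    obtain x where x: "x \<in> U" "KK n x = Max (KK n ` U)"
    proof -
      have "Max (KK n ` U) \<in> KK n ` U" using finU Une by (intro Max_in) auto
      then show ?thesis using that by auto
    qed
    have heav: "hv n y x" if "y \<in> U" "y \<noteq> x" for y
    proof -
      have "KK n y \<le> KK n x" using x finU that by simp
      moreover have "KK n y \<noteq> KK n x" using KK_inj[of y n x] that x Un by auto
      ultimately show ?thesis unfolding hv_def by simp
    qed
    define H where "H = U - {x}"
    have finH: "finite H" using finU by (simp add: H_def)
    have cardH: "card H \<ge> k" using False x finU by (simp add: H_def)
    have HU: "H \<subseteq> U" by (auto simp: H_def)
    have xn: "x \<le> n" using x Un by auto
    have nc: "bnd n x r < D" if "r \<in> H" for r
    proof -
      have "r \<in> R" "hv n r x" using that HU UR heav by (auto simp: H_def)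
      then show ?thesis using x(1) unfolding U_def by auto
    qed
    have ext: "\<forall>r\<in>U. r < 2*k \<or> n - 2*k < r"
    proof (cases "2*x \<le> n")
      case True
      have Hr: "x < r \<and> r + x < n" if "r \<in> H" for r
        using hv_low[OF _ xn True, of r] that HU Un heav by (auto simp: H_def)
      have xk: "x < k"
      proof (rule ccontr)
        assume "\<not> x < k"
        obtain m where m: "m \<in> H" "x + k \<le> m" using pigeon_up[OF finH cardH k1] Hr by blast
        have h: "k \<le> m - x" "m - x + k \<le> n - x" "(n+k+1) div 2 \<le> n - x"
          using m Hr[OF m(1)] \<open>\<not> x < k\<close> by (linarith, linarith, intro div2_le, linarith)
        have "D \<le> bnd n x m" unfolding Dd bnd_def using D_le[OF h] Hr[OF m(1)] by simp
        then show False using nc[OF m(1)] by simp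
      qed
      show ?thesis
      proof
        fix r assume r: "r \<in> U"
        show "r < 2*k \<or> n - 2*k < r"
        proof (cases "r = x")
          case True then show ?thesis using xk by simp
        next
          case False
          then have rH: "r \<in> H" using r by (simp add: H_def)
          show ?thesis
          proof (rule ccontr)
            assume "\<not> ?thesis"
            then have h: "k \<le> r - x" "r - x + k \<le> n - x" "(n+k+1) div 2 \<le> n - x"
              using Hr[OF rH] xk nbig by (linarith, linarith, intro div2_le, linarith)
            have "D \<le> bnd n x r" unfolding Dd bnd_def using D_le[OF h] Hr[OF rH] by simp
            then show False using nc[OF rH] by simp
          qed
        qed
      qed
    next
      case False
      have Hr: "n \<le> r + x \<and> r < x" if "r \<in> H" for r
        using hv_high[OF _ xn False, of r] that HU Un heav by (auto simp: H_def)
      have xk: "n - k < x"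
      proof (rule ccontr)
        assume "\<not> n - k < x"
        obtain m where m: "m \<in> H" "m + k \<le> x" using pigeon_down[OF finH cardH k1] Hr by blast
        have h: "k \<le> x - m" "x - m + k \<le> x" "(n+k+1) div 2 \<le> x"
        proof -
          have xk2: "x + k \<le> n" using \<open>\<not> n - k < x\<close> nbig by arith
          have hm: "n \<le> m + x" "m < x" using Hr[OF m(1)] by auto
          show "k \<le> x - m" using m(2) by linarith
          show "x - m + k \<le> x" using hm xk2 by linarith
          show "(n+k+1) div 2 \<le> x" using hm m(2) by (intro div2_le) linarith
        qed
        have "D \<le> bnd n x m" unfolding Dd bnd_def using D_le[OF h] Hr[OF m(1)] by simp
        then show False using nc[OF m(1)] by simp
      qed
      show ?thesis
      proof
        fix r assume r: "r \<in> U"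
        show "r < 2*k \<or> n - 2*k < r"
        proof (cases "r = x")
          case True then show ?thesis using xk by arith
        next
          case False
          then have rH: "r \<in> H" using r by (simp add: H_def)
          show ?thesis
          proof (rule ccontr)
            assume "\<not> ?thesis"
            then have a1: "n < x + k" "2*k \<le> r" "r + 2*k \<le> n" using xk nbig by arith+
            have h: "k \<le> x - r" "x - r + k \<le> x" "(n+k+1) div 2 \<le> x"
            proof -
              show "k \<le> x - r" using a1 by linarith
              show "x - r + k \<le> x" using a1 Hr[OF rH] by linarith
              show "(n+k+1) div 2 \<le> x" using a1 nbig by (intro div2_le) linarith
            qed
            have "D \<le> bnd n x r" unfolding Dd bnd_def using D_le[OF h] Hr[OF rH] by simp
            then show False using nc[OF rH] by simp
          qed
        qed
      qed
    qed
    show ?thesis using extremes[OF k1 nbig Ld Un ext] .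
  qed
  then show ?thesis unfolding U_def .
qed

lemma count_gen:
  assumes U: "finite U" and BU: "B \<subseteq> U"
  shows "card {zs \<in> permutations_of_set U. set (take (card B) zs) = B \<and> Q (take (card B) zs)}
         = card {xs \<in> permutations_of_set B. Q xs} * fact (card U - card B)"
proof -
  let ?X = "{xs \<in> permutations_of_set B. Q xs}"
  let ?Y = "permutations_of_set (U - B)"
  let ?g = "\<lambda>(xs, ys). xs @ ys"
  have finB: "finite B" using U BU finite_subset by blast
  have lenX: "length xs = card B" if "xs \<in> ?X" for xs
    using that by (auto dest: length_finite_permutations_of_set)
  have inj: "inj_on ?g (?X \<times> ?Y)"
  proof (rule inj_onI)
    fix p q assume p: "p \<in> ?X \<times> ?Y" and q: "q \<in> ?X \<times> ?Y" and e: "?g p = ?g q"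
    obtain xs ys where pp: "p = (xs, ys)" by (cases p)
    obtain xs' ys' where qq: "q = (xs', ys')" by (cases q)
    have "length xs = length xs'" using p q pp qq lenX by auto
    then show "p = q" using e pp qq by (auto simp: append_eq_append_conv)
  qed
  have eq: "{zs \<in> permutations_of_set U. set (take (card B) zs) = B \<and> Q (take (card B) zs)} = ?g ` (?X \<times> ?Y)"
  proof
    show "{zs \<in> permutations_of_set U. set (take (card B) zs) = B \<and> Q (take (card B) zs)} \<subseteq> ?g ` (?X \<times> ?Y)"
    proof
      fix zs assume zs: "zs \<in> {zs \<in> permutations_of_set U. set (take (card B) zs) = B \<and> Q (take (card B) zs)}"
      then have d: "distinct zs" and s: "set zs = U" and t: "set (take (card B) zs) = B" and q: "Q (take (card B) zs)"
        by (auto simp: permutations_of_set_def)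
      have disj: "set (take (card B) zs) \<inter> set (drop (card B) zs) = {}"
        using d by (rule set_take_disj_set_drop_if_distinct) simp
      have un: "set (take (card B) zs) \<union> set (drop (card B) zs) = U"
        using s by (metis append_take_drop_id set_append)
      have "take (card B) zs \<in> ?X" using t q d by (auto simp: permutations_of_set_def)
      moreover have "drop (card B) zs \<in> ?Y" using disj un t d by (auto simp: permutations_of_set_def)
      ultimately show "zs \<in> ?g ` (?X \<times> ?Y)"
        by (intro image_eqI[of _ _ "(take (card B) zs, drop (card B) zs)"]) auto
    qed
  next
    show "?g ` (?X \<times> ?Y) \<subseteq> {zs \<in> permutations_of_set U. set (take (card B) zs) = B \<and> Q (take (card B) zs)}"
    proof
      fix zs assume "zs \<in> ?g ` (?X \<times> ?Y)"
      then obtain xs ys where xy: "xs \<in> ?X" "ys \<in> ?Y" "zs = xs @ ys" by auto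
      have l: "length xs = card B" using lenX xy by auto
      have "set zs = U" "distinct zs" using xy BU by (auto simp: permutations_of_set_def)
      moreover have "take (card B) zs = xs" using xy l by simp
      ultimately show "zs \<in> {zs \<in> permutations_of_set U. set (take (card B) zs) = B \<and> Q (take (card B) zs)}"
        using xy by (auto simp: permutations_of_set_def)
    qed
  qed
  have "card (?g ` (?X \<times> ?Y)) = card ?X * card ?Y"
    using inj by (simp add: card_image card_cartesian_product)
  also have "card ?Y = fact (card U - card B)" using U BU finB by (simp add: card_Diff_subset)
  finally show ?thesis using eq by simp
qed

lemma count1:
  assumes "finite U" "B \<subseteq> U"
  shows "card {zs \<in> permutations_of_set U. set (take (card B) zs) = B} = fact (card B) * fact (card U - card B)"
proof -
  have "finite B" using assms finite_subset by blast
  then show ?thesis using count_gen[OF assms, of "\<lambda>_. True"] by simp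
qed

lemma count2:
  assumes U: "finite U" and AB: "A \<subseteq> B" and BU: "B \<subseteq> U"
  shows "card {zs \<in> permutations_of_set U. set (take (card A) zs) = A \<and> set (take (card B) zs) = B}
    = fact (card A) * fact (card B - card A) * fact (card U - card B)"
proof -
  have finB: "finite B" using U BU finite_subset by blast
  have le: "card A \<le> card B" using AB finB by (simp add: card_mono)
  have "{zs \<in> permutations_of_set U. set (take (card A) zs) = A \<and> set (take (card B) zs) = B}
      = {zs \<in> permutations_of_set U. set (take (card B) zs) = B \<and> (\<lambda>xs. set (take (card A) xs) = A) (take (card B) zs)}"
    using le by (auto simp: min_def)
  also have "card \<dots> = card {xs \<in> permutations_of_set B. set (take (card A) xs) = A} * fact (card U - card B)"
    by (rule count_gen[OF U BU])
  also have "card {xs \<in> permutations_of_set B. set (take (card A) xs) = A} = fact (card A) * fact (card B - card A)"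
    by (rule count1[OF finB AB])
  finally show ?thesis by simp
qed

definition goodp :: "nat \<Rightarrow> nat \<Rightarrow> nat set \<Rightarrow> nat set \<Rightarrow> bool" where
  "goodp n D A B \<longleftrightarrow> (A \<subset> B \<or> B \<subset> A) \<and> hv n (card B) (card A) \<and> D \<le> bnd n (card A) (card B)"

lemma hv_irrefl: "\<not> hv n r r" by (simp add: hv_def)
lemma hv_asym: "hv n a b \<Longrightarrow> \<not> hv n b a" by (simp add: hv_def)

lemma weight_count:
  assumes "A \<subseteq> {1..n}"
  shows "(n choose card A) * card {zs \<in> permutations_of_set {1..n}. set (take (card A) zs) = A} = fact n"
proof -
  have le: "card A \<le> n" using assms card_mono[of "{1..n}" A] by simp
  have "card {zs \<in> permutations_of_set {1..n}. set (take (card A) zs) = A} = fact (card A) * fact (n - card A)"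
    using count1[of "{1..n}" A] assms by simp
  then show ?thesis using binomial_fact_lemma[OF le] by (simp add: algebra_simps)
qed

lemma pair_count:
  assumes A: "A \<subseteq> {1..n}" and B: "B \<subseteq> {1..n}" and g: "goodp n D A B"
  shows "D * (n choose card A) * card {zs \<in> permutations_of_set {1..n}. set (take (card A) zs) = A \<and> set (take (card B) zs) = B} \<le> fact n"
proof -
  let ?P = "permutations_of_set {1..n}"
  have finB: "finite B" "finite A" using A B finite_subset by auto
  have cA: "card A \<le> n" "card B \<le> n" using A B card_mono[of "{1..n}"] by auto
  have Dle: "D \<le> bnd n (card A) (card B)" using g by (simp add: goodp_def)
  from g consider "A \<subset> B" | "B \<subset> A" by (auto simp: goodp_def)
  then show ?thesis
  proof cases
    case 1
    then have lt: "card A < card B" using finB psubset_card_mono by blast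
    have c: "card {zs \<in> ?P. set (take (card A) zs) = A \<and> set (take (card B) zs) = B}
      = fact (card A) * fact (card B - card A) * fact (n - card B)"
      using count2[of "{1..n}" A B] 1 B by auto
    have bd: "bnd n (card A) (card B) = (n - card A) choose (card B - card A)" using lt by (simp add: bnd_def)
    have e1: "fact (card A) * fact (n - card A) * (n choose card A) = fact n"
      using binomial_fact_lemma cA by blast
    have e2: "fact (card B - card A) * fact (n - card A - (card B - card A)) * ((n - card A) choose (card B - card A)) = fact (n - card A)"
      using binomial_fact_lemma[of "card B - card A" "n - card A"] cA lt by simp
    have e3: "n - card A - (card B - card A) = n - card B" using lt cA by simp
    have "D * (n choose card A) * (fact (card A) * fact (card B - card A) * fact (n - card B))
        \<le> ((n - card A) choose (card B - card A)) * (n choose card A) * (fact (card A) * fact (card B - card A) * fact (n - card B))"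
      using Dle bd by (intro mult_right_mono) auto
    also have "\<dots> = fact (card A) * (n choose card A) * (fact (card B - card A) * fact (n - card B) * ((n - card A) choose (card B - card A)))"
      by (simp add: algebra_simps)
    also have "\<dots> = fact n" using e1 e2 e3 by (simp add: algebra_simps)
    finally show ?thesis using c by simp
  next
    case 2
    then have lt: "card B < card A" using finB psubset_card_mono by blast
    have c: "card {zs \<in> ?P. set (take (card A) zs) = A \<and> set (take (card B) zs) = B}
      = fact (card B) * fact (card A - card B) * fact (n - card A)"
    proof -
      have "{zs \<in> ?P. set (take (card A) zs) = A \<and> set (take (card B) zs) = B}
          = {zs \<in> ?P. set (take (card B) zs) = B \<and> set (take (card A) zs) = A}" by auto
      then show ?thesis using count2[of "{1..n}" B A] 2 A by auto
    qed
    have bd: "bnd n (card A) (card B) = card A choose (card A - card B)" using lt by (simp add: bnd_def)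
    have e1: "fact (card A) * fact (n - card A) * (n choose card A) = fact n"
      using binomial_fact_lemma cA by blast
    have e2: "fact (card A - card B) * fact (card A - (card A - card B)) * (card A choose (card A - card B)) = fact (card A)"
      using binomial_fact_lemma[of "card A - card B" "card A"] by simp
    have e3: "card A - (card A - card B) = card B" using lt by simp
    have "D * (n choose card A) * (fact (card B) * fact (card A - card B) * fact (n - card A))
        \<le> (card A choose (card A - card B)) * (n choose card A) * (fact (card B) * fact (card A - card B) * fact (n - card A))"
      using Dle bd by (intro mult_right_mono) auto
    also have "\<dots> = (fact (card A - card B) * fact (card B) * (card A choose (card A - card B))) * fact (n - card A) * (n choose card A)"
      by (simp add: algebra_simps)
    also have "\<dots> = fact n" using e1 e2 e3 by (simp add: algebra_simps)
    finally show ?thesis using c by simp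
  qed
qed

lemma chain_bound:
  fixes n k L D :: nat and S :: "nat set set" and \<pi> :: "nat list"
  assumes k1: "k \<ge> 1" and nbig: "6*k+2 \<le> n" and Ld: "L = (n+2-k) div 2"
    and Dd: "D = ((n+k+1) div 2) choose k" and SU: "S \<subseteq> Pow {1..n}"
  shows "(\<Sum>A\<in>{A\<in>S. set (take (card A) \<pi>) = A}. n choose card A)
     \<le> (\<Sum>m\<in>{L..<L+k}. n choose m)
       + (\<Sum>p\<in>{p\<in>S\<times>S. goodp n D (fst p) (snd p) \<and> set (take (card (fst p)) \<pi>) = fst p
                 \<and> set (take (card (snd p)) \<pi>) = snd p}. n choose card (fst p))"
proof -
  define C where "C = {A\<in>S. set (take (card A) \<pi>) = A}"
  have finS: "finite S" using SU by (rule finite_subset) simp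
  have finC: "finite C" using finS by (simp add: C_def)
  have CS: "C \<subseteq> S" by (auto simp: C_def)
  have Cn: "card A \<le> n" if "A \<in> C" for A
    using that CS SU card_mono[of "{1..n}" A] by auto
  have chain: "A \<subset> B" if "A \<in> C" "B \<in> C" "card A < card B" for A B
  proof -
    have "A = set (take (card A) \<pi>)" "B = set (take (card B) \<pi>)" using that by (auto simp: C_def)
    then have "A \<subseteq> B" using that(3) by (metis less_imp_le set_take_subset_set_take)
    moreover have "A \<noteq> B" using that(3) by auto
    ultimately show ?thesis by auto
  qed
  have injc: "inj_on card C"
  proof (rule inj_onI)
    fix A B assume "A \<in> C" "B \<in> C" "card A = card B"
    then show "A = B" by (metis (mono_tags, lifting) C_def mem_Collect_eq)
  qed
  define R where "R = card ` C"
  have finR: "finite R" using finC by (simp add: R_def)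
  have Rn: "R \<subseteq> {..n}" using Cn by (auto simp: R_def)
  define Ch where "Ch = {A\<in>C. \<exists>B\<in>C. goodp n D A B}"
  have charged_iff: "(\<exists>B\<in>C. goodp n D A B) \<longleftrightarrow> (\<exists>r'\<in>R. hv n r' (card A) \<and> D \<le> bnd n (card A) r')"
    if A: "A \<in> C" for A
  proof
    assume "\<exists>B\<in>C. goodp n D A B"
    then show "\<exists>r'\<in>R. hv n r' (card A) \<and> D \<le> bnd n (card A) r'"
      by (auto simp: goodp_def R_def)
  next
    assume "\<exists>r'\<in>R. hv n r' (card A) \<and> D \<le> bnd n (card A) r'"
    then obtain B where B: "B \<in> C" "hv n (card B) (card A)" "D \<le> bnd n (card A) (card B)"
      by (auto simp: R_def)
    then have "card B \<noteq> card A" using hv_irrefl by metis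
    then have "A \<subset> B \<or> B \<subset> A" using chain[OF A B(1)] chain[OF B(1) A] by linarith
    then show "\<exists>B\<in>C. goodp n D A B" using B by (auto simp: goodp_def)
  qed
  have img: "card ` (C - Ch) = {r\<in>R. \<not>(\<exists>r'\<in>R. hv n r' r \<and> D \<le> bnd n r r')}"
  proof
    show "card ` (C - Ch) \<subseteq> {r\<in>R. \<not>(\<exists>r'\<in>R. hv n r' r \<and> D \<le> bnd n r r')}"
    proof
      fix r assume "r \<in> card ` (C - Ch)"
      then obtain A where A: "A \<in> C" "A \<notin> Ch" "r = card A" by auto
      then show "r \<in> {r\<in>R. \<not>(\<exists>r'\<in>R. hv n r' r \<and> D \<le> bnd n r r')}"
        using charged_iff[OF A(1)] by (auto simp: Ch_def R_def)
    qed
  next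
    show "{r\<in>R. \<not>(\<exists>r'\<in>R. hv n r' r \<and> D \<le> bnd n r r')} \<subseteq> card ` (C - Ch)"
    proof
      fix r assume r: "r \<in> {r\<in>R. \<not>(\<exists>r'\<in>R. hv n r' r \<and> D \<le> bnd n r r')}"
      then obtain A where A: "A \<in> C" "r = card A" by (auto simp: R_def)
      then have "A \<notin> Ch" using charged_iff[OF A(1)] r by (auto simp: Ch_def)
      then show "r \<in> card ` (C - Ch)" using A by auto
    qed
  qed
  have s1: "(\<Sum>A\<in>C - Ch. n choose card A) \<le> (\<Sum>m\<in>{L..<L+k}. n choose m)"
  proof -
    have "(\<Sum>A\<in>C - Ch. n choose card A) = (\<Sum>r\<in>card ` (C - Ch). n choose r)"
      using injc by (subst sum.reindex) (auto intro: inj_on_subset)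
    also have "\<dots> \<le> (\<Sum>m\<in>{L..<L+k}. n choose m)"
      unfolding img using uncharged_bound[OF k1 nbig Ld Dd finR Rn] .
    finally show ?thesis .
  qed
  define T where "T = {p\<in>S\<times>S. goodp n D (fst p) (snd p) \<and> set (take (card (fst p)) \<pi>) = fst p
                 \<and> set (take (card (snd p)) \<pi>) = snd p}"
  have s2: "(\<Sum>A\<in>Ch. n choose card A) \<le> (\<Sum>p\<in>T. n choose card (fst p))"
  proof -
    have "(\<Sum>A\<in>Ch. n choose card A) \<le> (\<Sum>A\<in>Ch. \<Sum>B\<in>{B\<in>C. goodp n D A B}. n choose card A)"
    proof (rule sum_mono)
      fix A assume "A \<in> Ch"
      then obtain B where "B \<in> {B\<in>C. goodp n D A B}" by (auto simp: Ch_def)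
      moreover have "finite {B\<in>C. goodp n D A B}" using finC by simp
      ultimately have "card {B\<in>C. goodp n D A B} \<ge> 1"
        by (metis One_nat_def Suc_leI card_gt_0_iff empty_iff)
      then show "n choose card A \<le> (\<Sum>B\<in>{B\<in>C. goodp n D A B}. n choose card A)" by simp
    qed
    also have "\<dots> \<le> (\<Sum>A\<in>C. \<Sum>B\<in>{B\<in>C. goodp n D A B}. n choose card A)"
      using finC by (intro sum_mono2) (auto simp: Ch_def)
    also have "\<dots> = (\<Sum>p\<in>(SIGMA A:C. {B\<in>C. goodp n D A B}). n choose card (fst p))"
      using finC by (subst sum.Sigma) (auto simp: case_prod_beta)
    also have "(SIGMA A:C. {B\<in>C. goodp n D A B}) = T"
      by (auto simp: T_def C_def)
    finally show ?thesis .
  qed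
  have "(\<Sum>A\<in>C. n choose card A) = (\<Sum>A\<in>C - Ch. n choose card A) + (\<Sum>A\<in>Ch. n choose card A)"
  proof -
    have "Ch \<subseteq> C" by (auto simp: Ch_def)
    then show ?thesis using finC by (metis add.commute sum.subset_diff)
  qed
  then show ?thesis using s1 s2 unfolding C_def T_def by linarith
qed

lemma G_le_comp:
  fixes S :: "nat set set"
  assumes finS: "finite S"
  shows "card {p\<in>S\<times>S. goodp n D (fst p) (snd p)} \<le> comp S"
proof -
  let ?G = "{p\<in>S\<times>S. goodp n D (fst p) (snd p)}"
  let ?f = "\<lambda>p. if fst p \<subset> snd p then p else (snd p, fst p)"
  have inj: "inj_on ?f ?G"
  proof (rule inj_onI)
    fix p q assume p: "p \<in> ?G" and q: "q \<in> ?G" and e: "?f p = ?f q"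
    obtain a b where pp: "p = (a, b)" by (cases p)
    obtain c d where qq: "q = (c, d)" by (cases q)
    have gp: "goodp n D a b" and gq: "goodp n D c d" using p q pp qq by auto
    show "p = q"
    proof (cases "a \<subset> b")
      case True
      show ?thesis
      proof (cases "c \<subset> d")
        case True then show ?thesis using e pp qq \<open>a \<subset> b\<close> by auto
      next
        case False
        then have "a = d" "b = c" using e pp qq \<open>a \<subset> b\<close> by auto
        then show ?thesis using gp gq hv_asym unfolding goodp_def by blast
      qed
    next
      case False
      show ?thesis
      proof (cases "c \<subset> d")
        case True
        then have "b = c" "a = d" using e pp qq \<open>\<not> a \<subset> b\<close> by auto
        then show ?thesis using gp gq hv_asym unfolding goodp_def by blast
      next
        case False then show ?thesis using e pp qq \<open>\<not> a \<subset> b\<close> by auto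
      qed
    qed
  qed
  have sub: "?f ` ?G \<subseteq> {(A, B). A \<in> S \<and> B \<in> S \<and> A \<subset> B}"
  proof
    fix x assume "x \<in> ?f ` ?G"
    then obtain p where p: "p \<in> ?G" "x = ?f p" by (rule imageE)
    obtain a b where pp: "p = (a, b)" by (cases p)
    have ab: "a \<in> S" "b \<in> S" "a \<subset> b \<or> b \<subset> a" using p pp by (auto simp: goodp_def)
    show "x \<in> {(A, B). A \<in> S \<and> B \<in> S \<and> A \<subset> B}"
    proof (cases "a \<subset> b")
      case True then show ?thesis using p(2) pp ab by simp
    next
      case False then show ?thesis using p(2) pp ab by simp
    qed
  qed
  have fin: "finite {(A, B). A \<in> S \<and> B \<in> S \<and> A \<subset> B}"
    by (rule finite_subset[of _ "S \<times> S"]) (use finS in auto)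
  have "card ?G = card (?f ` ?G)" using inj by (rule card_image[symmetric])
  also have "\<dots> \<le> card {(A, B). A \<in> S \<and> B \<in> S \<and> A \<subset> B}" using sub fin by (rule card_mono[rotated])
  finally show ?thesis by (simp add: comp_def)
qed

lemma global_bound:
  fixes n k L D :: nat and S :: "nat set set"
  assumes k1: "k \<ge> 1" and nbig: "6*k+2 \<le> n" and Ld: "L = (n+2-k) div 2"
    and Dd: "D = ((n+k+1) div 2) choose k" and SU: "S \<subseteq> Pow {1..n}"
  shows "D * card S \<le> D * (\<Sum>m\<in>{L..<L+k}. n choose m) + comp S"
proof -
  let ?P = "permutations_of_set {1..n::nat}"
  let ?Mk = "\<Sum>m\<in>{L..<L+k}. n choose m"
  let ?w = "\<lambda>A::nat set. n choose card A"
  let ?G = "{p\<in>S\<times>S. goodp n D (fst p) (snd p)}"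
  let ?cond = "\<lambda>p \<pi>. set (take (card (fst p)) \<pi>) = fst p \<and> set (take (card (snd p)) \<pi>) = snd p"
  have finS: "finite S" using SU by (rule finite_subset) simp
  have finP: "finite ?P" by simp
  have cardP: "card ?P = fact n" by simp
  have finG: "finite ?G" using finS by simp
  have e1: "fact n * card S = (\<Sum>A\<in>S. \<Sum>\<pi>\<in>{\<pi>\<in>?P. set (take (card A) \<pi>) = A}. ?w A)"
  proof -
    have "(\<Sum>A\<in>S. \<Sum>\<pi>\<in>{\<pi>\<in>?P. set (take (card A) \<pi>) = A}. ?w A) = (\<Sum>A\<in>S. fact n)"
    proof (rule sum.cong)
      fix A assume "A \<in> S"
      then have "A \<subseteq> {1..n}" using SU by auto
      then show "(\<Sum>\<pi>\<in>{\<pi>\<in>?P. set (take (card A) \<pi>) = A}. ?w A) = fact n"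
        using weight_count[of A n] by (simp add: mult.commute)
    qed simp
    then show ?thesis by simp
  qed
  also have "\<dots> = (\<Sum>\<pi>\<in>?P. \<Sum>A\<in>{A\<in>S. set (take (card A) \<pi>) = A}. ?w A)"
    using finS finP by (rule sum.swap_restrict)
  also have "\<dots> \<le> (\<Sum>\<pi>\<in>?P. ?Mk + (\<Sum>p\<in>{p\<in>?G. ?cond p \<pi>}. ?w (fst p)))"
  proof (rule sum_mono)
    fix \<pi> assume "\<pi> \<in> ?P"
    have "{p\<in>?G. ?cond p \<pi>} = {p\<in>S\<times>S. goodp n D (fst p) (snd p) \<and> set (take (card (fst p)) \<pi>) = fst p
                 \<and> set (take (card (snd p)) \<pi>) = snd p}" by auto
    then show "(\<Sum>A\<in>{A\<in>S. set (take (card A) \<pi>) = A}. ?w A) \<le> ?Mk + (\<Sum>p\<in>{p\<in>?G. ?cond p \<pi>}. ?w (fst p))"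
      using chain_bound[OF k1 nbig Ld Dd SU, of \<pi>] by simp
  qed
  also have "\<dots> = fact n * ?Mk + (\<Sum>\<pi>\<in>?P. \<Sum>p\<in>{p\<in>?G. ?cond p \<pi>}. ?w (fst p))"
    by (simp add: sum.distrib)
  also have "(\<Sum>\<pi>\<in>?P. \<Sum>p\<in>{p\<in>?G. ?cond p \<pi>}. ?w (fst p)) = (\<Sum>p\<in>?G. \<Sum>\<pi>\<in>{\<pi>\<in>?P. ?cond p \<pi>}. ?w (fst p))"
    using finP finG by (rule sum.swap_restrict)
  also have "\<dots> = (\<Sum>p\<in>?G. ?w (fst p) * card {\<pi>\<in>?P. ?cond p \<pi>})"
    by (simp add: mult.commute)
  finally have main: "fact n * card S \<le> fact n * ?Mk + (\<Sum>p\<in>?G. ?w (fst p) * card {\<pi>\<in>?P. ?cond p \<pi>})" .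
  have "D * (\<Sum>p\<in>?G. ?w (fst p) * card {\<pi>\<in>?P. ?cond p \<pi>}) = (\<Sum>p\<in>?G. D * ?w (fst p) * card {\<pi>\<in>?P. ?cond p \<pi>})"
    by (simp add: sum_distrib_left mult.assoc)
  also have "\<dots> \<le> (\<Sum>p\<in>?G. fact n)"
  proof (rule sum_mono)
    fix p assume p: "p \<in> ?G"
    then have "fst p \<in> S" "snd p \<in> S" by auto
    then have "fst p \<subseteq> {1..n}" "snd p \<subseteq> {1..n}" using SU by blast+
    then show "D * ?w (fst p) * card {\<pi>\<in>?P. ?cond p \<pi>} \<le> fact n"
      using pair_count[of "fst p" n "snd p" D] p by simp
  qed
  also have "\<dots> = fact n * card ?G" by simp
  finally have m2: "D * (\<Sum>p\<in>?G. ?w (fst p) * card {\<pi>\<in>?P. ?cond p \<pi>}) \<le> fact n * card ?G" .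
  define X where "X = (\<Sum>p\<in>?G. ?w (fst p) * card {\<pi>\<in>?P. ?cond p \<pi>})"
  define Mk where "Mk = ?Mk"
  define F where "F = (fact n :: nat)"
  define g where "g = card ?G"
  define s where "s = card S"
  have main': "F * s \<le> F * Mk + X" using main unfolding X_def Mk_def F_def s_def .
  have m2': "D * X \<le> F * g" using m2 unfolding X_def F_def g_def .
  have "F * (D * s) \<le> F * (D * Mk + g)"
  proof -
    have "F * (D * s) = D * (F * s)" by (simp add: mult.left_commute)
    also have "\<dots> \<le> D * (F * Mk + X)" using main' by (rule mult_le_mono2)
    also have "\<dots> = F * (D * Mk) + D * X" by (simp add: distrib_left mult.left_commute)
    also have "\<dots> \<le> F * (D * Mk) + F * g" using m2' by simp
    also have "\<dots> = F * (D * Mk + g)" by (simp add: distrib_left)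
    finally show ?thesis .
  qed
  moreover have "F > 0" unfolding F_def by simp
  ultimately have "D * s \<le> D * Mk + g" by simp
  then have "D * card S \<le> D * ?Mk + card ?G" unfolding s_def Mk_def g_def .
  also have "card ?G \<le> comp S" using G_le_comp[OF finS] .
  finally show ?thesis by simp
qed

lemma ceil_half: "\<lceil>real_of_int m / 2\<rceil> = (m + 1) div 2"
proof -
  have "\<lceil>real_of_int m / 2\<rceil> = \<lceil>real_of_int m / real_of_int 2\<rceil>" by simp
  also have "\<dots> = - (- m div 2)" by (rule ceiling_divide_eq_div)
  also have "\<dots> = (m + 1) div 2" by presburger
  finally show ?thesis .
qed

theorem mainTheorem8:
  fixes k :: nat
  assumes "k \<ge> 1"
  shows "\<exists>n0::nat. \<forall>n \<ge> n0. \<forall>(t::int) (S::nat set set).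
    S \<subseteq> Pow {1..n} \<and>
    int (card S) \<ge> (\<Sum>r<k. int (n choose nat \<lceil>(real n - real k + 1 + 2 * real r) / 2\<rceil>)) + t
    \<longrightarrow> int (comp S) \<ge> t * int (nat \<lceil>(real n + real k) / 2\<rceil> choose k)"
proof (intro exI[of _ "6*k+2"] allI impI)
  fix n :: nat and t :: int and S :: "nat set set"
  assume nbig: "6*k+2 \<le> n"
  assume h: "S \<subseteq> Pow {1..n} \<and>
    int (card S) \<ge> (\<Sum>r<k. int (n choose nat \<lceil>(real n - real k + 1 + 2 * real r) / 2\<rceil>)) + t"
  define L where "L = (n+2-k) div 2"
  define D where "D = ((n+k+1) div 2) choose k"
  have c1: "nat \<lceil>(real n - real k + 1 + 2 * real r) / 2\<rceil> = L + r" for r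
  proof -
    have "real n - real k + 1 + 2 * real r = real_of_int (int n - int k + 1 + 2 * int r)" by simp
    then have "\<lceil>(real n - real k + 1 + 2 * real r) / 2\<rceil> = (int n - int k + 1 + 2 * int r + 1) div 2"
      using ceil_half by presburger
    also have "\<dots> = int L + int r" unfolding L_def using nbig by (simp add: zdiv_int[symmetric] of_nat_diff)
    finally show ?thesis by simp
  qed
  have c2: "nat \<lceil>(real n + real k) / 2\<rceil> = (n+k+1) div 2"
  proof -
    have "real n + real k = real_of_int (int n + int k)" by simp
    then have "\<lceil>(real n + real k) / 2\<rceil> = (int n + int k + 1) div 2"
      using ceil_half by presburger
    also have "\<dots> = int ((n+k+1) div 2)" by (simp add: zdiv_int)
    finally show ?thesis by simp
  qed
  have c3: "(\<Sum>r<k. int (n choose nat \<lceil>(real n - real k + 1 + 2 * real r) / 2\<rceil>))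
      = int (\<Sum>m\<in>{L..<L+k}. n choose m)"
  proof -
    have "(\<Sum>m\<in>{L..<L+k}. n choose m) = (\<Sum>m\<in>{0+L..<k+L}. n choose m)" by (simp add: add.commute)
    also have "\<dots> = (\<Sum>r\<in>{0..<k}. n choose (r + L))" by (rule sum.shift_bounds_nat_ivl)
    finally show ?thesis using c1 by (simp add: atLeast0LessThan add.commute)
  qed
  have gb: "D * card S \<le> D * (\<Sum>m\<in>{L..<L+k}. n choose m) + comp S"
    using global_bound[OF assms nbig L_def D_def] h by blast
  have tle: "t \<le> int (card S) - int (\<Sum>m\<in>{L..<L+k}. n choose m)" using h c3 by linarith
  have "t * int D \<le> (int (card S) - int (\<Sum>m\<in>{L..<L+k}. n choose m)) * int D"
    using tle by (intro mult_right_mono) auto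
  also have "\<dots> \<le> int (comp S)"
  proof -
    have "int D * int (card S) \<le> int D * int (\<Sum>m\<in>{L..<L+k}. n choose m) + int (comp S)"
      using gb by (metis of_nat_add of_nat_le_iff of_nat_mult)
    then show ?thesis by (simp add: algebra_simps)
  qed
  finally show "int (comp S) \<ge> t * int (nat \<lceil>(real n + real k) / 2\<rceil> choose k)"
    using c2 by (simp add: D_def)
qed

end
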